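(* Let $a>0$ and let $\epsilon>0$ be sufficiently small. For any solution $(x,v(x))$ of the regularized system $$\dot x=1,\qquad \epsilon\dot v=-a\epsilon v-\sin\!\left(\pi x\left[1+\tfrac12\psi(v)\right]\right)$$ there exists $x_T\ge0$ such that for all $x\ge x_T$ the solution is constrained in $V_0\cup V_-=\{(x,v):v<1\}$.
   Context: $\psi:\mathbb{R}\to\mathbb{R}$ is a transition function: $C^1$ on $\mathbb{R}$ and $C^2$ on $[-1,1]$, with $\psi(v)=\operatorname{sign}(v)$ for $|v|\ge1$, $\psi'(v)>0$ for $|v|<1$, and $\operatorname{sign}\psi''(v)=-\operatorname{sign}(v)$ at $|v|=1$. $V_0=\{|v|<1\}$ is the switching layer, $V_\pm=\{\pm v\ge1\}$ (note $V_-=\{v\le-1\}$). *)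

theory Defs
  imports "HOL-Analysis.Analysis"
begin

definition transition_function :: "(real \<Rightarrow> real) \<Rightarrow> bool" where
  "transition_function \<psi> \<longleftrightarrow>
     (\<forall>v. \<psi> differentiable at v) \<and> continuous_on UNIV (deriv \<psi>) \<and>
     (\<exists>\<psi>2. (\<forall>v\<in>{-1..1}. (deriv \<psi> has_real_derivative \<psi>2 v) (at v within {-1..1}))
          \<and> continuous_on {-1..1} \<psi>2
          \<and> sgn (\<psi>2 1) = - sgn (1::real) \<and> sgn (\<psi>2 (-1)) = - sgn (-1::real)) \<and>
     (\<forall>v. \<bar>v\<bar> \<ge> 1 \<longrightarrow> \<psi> v = sgn v) \<and>
     (\<forall>v. \<bar>v\<bar> < 1 \<longrightarrow> deriv \<psi> v > 0)"

definition regularized_solution ::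
    "(real \<Rightarrow> real) \<Rightarrow> real \<Rightarrow> real \<Rightarrow> real \<Rightarrow> (real \<Rightarrow> real) \<Rightarrow> bool" where
  "regularized_solution \<psi> a \<epsilon> x0 v \<longleftrightarrow>
     (\<forall>x\<ge>x0. \<exists>D. (v has_real_derivative D) (at x within {x0..}) \<and>
        \<epsilon> * D = - a * \<epsilon> * v x - sin (pi * x * (1 + \<psi> (v x) / 2)))"

end

theory Submission
  imports Defs
begin

lemma psi_D:
  assumes "transition_function \<psi>"
  shows "(\<psi> has_real_derivative deriv \<psi> v) (at v)"
  using assms by (simp add: transition_function_def DERIV_deriv_iff_real_differentiable)

lemma psi_cont: assumes "transition_function \<psi>" shows "continuous_on UNIV \<psi>"
proof -
  have "\<forall>v. \<psi> differentiable at v" using assms by (simp add: transition_function_def)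
  then show ?thesis by (simp add: continuous_at_imp_continuous_on differentiable_imp_continuous_within)
qed

lemma psi_val: assumes "transition_function \<psi>" "\<bar>v\<bar> \<ge> 1" shows "\<psi> v = sgn v"
  using assms by (simp add: transition_function_def)

lemma psi_dpos: assumes "transition_function \<psi>" "\<bar>v\<bar> < 1" shows "deriv \<psi> v > 0"
  using assms by (simp add: transition_function_def)

lemma dpsi_cont: assumes "transition_function \<psi>" shows "isCont (deriv \<psi>) v"
  using assms by (simp add: transition_function_def continuous_on_eq_continuous_at)

lemma psi_dout: assumes "transition_function \<psi>" "\<bar>v\<bar> > 1" shows "deriv \<psi> v = 0"
proof -
  have ev: "eventually (\<lambda>t. \<psi> t = (\<lambda>_. sgn v) t) (nhds v)"
  proof (cases "v > 1")
    case True
    have "eventually (\<lambda>t. t \<in> {1<..}) (nhds v)"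
      using True by (intro eventually_nhds_in_open) auto
    then show ?thesis
      by eventually_elim (use True assms(1) in \<open>auto simp: psi_val\<close>)
  next
    case False
    then have "v < -1" using assms(2) by auto
    have "eventually (\<lambda>t. t \<in> {..<-1}) (nhds v)"
      using \<open>v < -1\<close> by (intro eventually_nhds_in_open) auto
    then show ?thesis
      by eventually_elim (use \<open>v < -1\<close> assms(1) in \<open>auto simp: psi_val\<close>)
  qed
  have "((\<lambda>_. sgn v) has_real_derivative 0) (at v)" by simp
  then have "(\<psi> has_real_derivative 0) (at v)"
    using DERIV_cong_ev[OF refl ev refl] by simp
  then show ?thesis using psi_D[OF assms(1)] DERIV_unique by blast
qed

lemma zero_right:
  fixes f :: "real \<Rightarrow> real"
  assumes "isCont f a" "\<And>x. x > a \<Longrightarrow> f x = 0" shows "f a = 0"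
proof -
  have "(\<lambda>n. a + inverse (real (Suc n))) \<longlonglongrightarrow> a + 0"
    by (intro tendsto_add tendsto_const LIMSEQ_inverse_real_of_nat)
  then have t: "(\<lambda>n. a + inverse (real (Suc n))) \<longlonglongrightarrow> a" by simp
  have "(\<lambda>n. f (a + inverse (real (Suc n)))) \<longlonglongrightarrow> f a"
    by (rule isCont_tendsto_compose[OF assms(1) t])
  moreover have "\<And>n. f (a + inverse (real (Suc n))) = 0"
    by (rule assms(2)) simp
  ultimately have "(\<lambda>n. 0::real) \<longlonglongrightarrow> f a" by simp
  then show ?thesis using LIMSEQ_unique[OF _ tendsto_const] by metis
qed

lemma zero_left:
  fixes f :: "real \<Rightarrow> real"
  assumes "isCont f a" "\<And>x. x < a \<Longrightarrow> f x = 0" shows "f a = 0"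
proof -
  have "(\<lambda>n. a - inverse (real (Suc n))) \<longlonglongrightarrow> a - 0"
    by (intro tendsto_diff tendsto_const LIMSEQ_inverse_real_of_nat)
  then have t: "(\<lambda>n. a - inverse (real (Suc n))) \<longlonglongrightarrow> a" by simp
  have "(\<lambda>n. f (a - inverse (real (Suc n)))) \<longlonglongrightarrow> f a"
    by (rule isCont_tendsto_compose[OF assms(1) t])
  moreover have "\<And>n. f (a - inverse (real (Suc n))) = 0"
    by (rule assms(2)) simp
  ultimately have "(\<lambda>n. 0::real) \<longlonglongrightarrow> f a" by simp
  then show ?thesis using LIMSEQ_unique[OF _ tendsto_const] by metis
qed

lemma psi_d1: assumes "transition_function \<psi>" shows "deriv \<psi> 1 = 0" "deriv \<psi> (-1) = 0"
  using zero_right[OF dpsi_cont[OF assms], of 1] zero_left[OF dpsi_cont[OF assms], of "-1"]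
    psi_dout[OF assms] by auto

lemma psi_dnn: assumes "transition_function \<psi>" shows "deriv \<psi> v \<ge> 0"
proof -
  consider "\<bar>v\<bar> < 1" | "\<bar>v\<bar> > 1" | "v = 1" | "v = -1" by linarith
  then show ?thesis
  proof cases
    case 1 then show ?thesis using psi_dpos[OF assms, of v] by simp
  next
    case 2 then show ?thesis using psi_dout[OF assms, of v] by simp
  next
    case 3 then show ?thesis using psi_d1[OF assms] by simp
  next
    case 4 then show ?thesis using psi_d1[OF assms] by simp
  qed
qed

lemma psi_mono: assumes "transition_function \<psi>" "u \<le> w" shows "\<psi> u \<le> \<psi> w"
  by (rule deriv_nonneg_imp_mono[of u w \<psi> "deriv \<psi>"])
     (simp_all add: psi_D[OF assms(1)] psi_dnn[OF assms(1)] assms(2))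

lemma psi_le1: assumes "transition_function \<psi>" shows "\<psi> v \<le> 1"
proof (cases "v \<le> 1")
  case True
  then show ?thesis using psi_mono[OF assms True] psi_val[OF assms, of 1] by simp
next
  case False
  then show ?thesis using psi_val[OF assms, of v] by simp
qed

lemma psi_ge1: assumes "transition_function \<psi>" "v \<ge> 1" shows "\<psi> v = 1"
  using psi_val[OF assms(1), of v] assms(2) by simp

lemma psi_lt1: assumes "transition_function \<psi>" "v < 1" shows "\<psi> v < 1"
proof (cases "v \<le> -1")
  case True
  then show ?thesis using psi_val[OF assms(1), of v] by simp
next
  case False
  obtain z where z: "v < z" "z < 1" "\<psi> 1 - \<psi> v = (1 - v) * deriv \<psi> z"
    using MVT2[of v 1 \<psi> "deriv \<psi>"] psi_D[OF assms(1)] assms(2) by blast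
  have "deriv \<psi> z > 0" using psi_dpos[OF assms(1)] z False by auto
  then have "\<psi> 1 - \<psi> v > 0" using z assms(2) by simp
  then show ?thesis using psi_ge1[OF assms(1), of 1] by simp
qed

lemma psi_top:
  assumes tf: "transition_function \<psi>" and Lp: "\<Lambda> > 0"
  shows "\<exists>\<eta>>0. \<eta> \<le> 1 \<and> (\<forall>v. 1 - \<eta> < v \<and> v < 1 \<longrightarrow> deriv \<psi> v \<ge> \<Lambda> * (1 - \<psi> v))"
proof -
  obtain \<psi>2 where d2: "\<forall>v\<in>{-1..1}. (deriv \<psi> has_real_derivative \<psi>2 v) (at v within {-1..1})"
    and c2: "continuous_on {-1..1} \<psi>2" and s2: "sgn (\<psi>2 1) = - sgn (1::real)"
    using tf unfolding transition_function_def by blast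
  have neg: "\<psi>2 1 < 0" using s2 by (simp add: sgn_if split: if_splits)
  define c where "c = - \<psi>2 1 / 2"
  have cpos: "c > 0" using neg by (simp add: c_def)
  obtain d1 where d1: "d1 > 0" "\<forall>t\<in>{-1..1}. dist t 1 < d1 \<longrightarrow> dist (\<psi>2 t) (\<psi>2 1) < c"
    using c2[unfolded continuous_on_iff, rule_format, of 1 c] cpos by auto
  have dc: "continuous_on UNIV (deriv \<psi>)" using tf by (simp add: transition_function_def)
  obtain d2 where d2p: "d2 > 0" "\<forall>t. dist t 1 < d2 \<longrightarrow> dist (deriv \<psi> t) (deriv \<psi> 1) < c / \<Lambda>"
    using dc[unfolded continuous_on_iff, rule_format, of 1 "c / \<Lambda>"] cpos Lp by auto
  define \<eta> where "\<eta> = min (min d1 d2) 1"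
  have etap: "\<eta> > 0" "\<eta> \<le> 1" using d1 d2p by (auto simp: \<eta>_def)
  show ?thesis
  proof (intro exI conjI allI impI)
    show "\<eta> > 0" "\<eta> \<le> 1" by fact+
    fix v assume v: "1 - \<eta> < v \<and> v < 1"
    have vd1: "1 - v < d1" and vd2: "1 - v < d2" and v0: "v > 0"
      using v by (auto simp: \<eta>_def)
    define h where "h t = deriv \<psi> t - c * (1 - t)" for t
    have hc: "continuous_on {v..1} h" unfolding h_def
      by (intro continuous_intros continuous_on_subset[OF dc]) auto
    have hd: "(h has_real_derivative (\<psi>2 t + c)) (at t)" if "v < t" "t < 1" for t
    proof -
      have "t \<in> interior {-1..1::real}" using that v0 by auto
      then have "(deriv \<psi> has_real_derivative \<psi>2 t) (at t)"
        using d2[rule_format, of t] that v0 at_within_interior[of t "{-1..1::real}"] by auto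
      then show ?thesis unfolding h_def
        by (auto intro!: derivative_eq_intros)
    qed
    obtain l z where lz: "v < z" "z < 1" "(h has_real_derivative l) (at z)" "h 1 - h v = (1 - v) * l"
      using MVT[of v 1 h] v hc hd real_differentiable_def by blast
    have "l = \<psi>2 z + c" using DERIV_unique[OF lz(3) hd[OF lz(1,2)]] .
    moreover have "\<psi>2 z < \<psi>2 1 + c"
      using d1(2)[rule_format, of z] lz vd1 v0 by (auto simp: dist_real_def)
    ultimately have "l < 0" by (simp add: c_def)
    then have "h 1 - h v \<le> 0" using lz(4) v by (simp add: mult_nonneg_nonpos)
    moreover have "h 1 = 0" using psi_d1[OF tf] by (simp add: h_def)
    ultimately have A: "deriv \<psi> v \<ge> c * (1 - v)" by (simp add: h_def)
    obtain z2 where z2: "v < z2" "z2 < 1" "\<psi> 1 - \<psi> v = (1 - v) * deriv \<psi> z2"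
      using MVT2[of v 1 \<psi> "deriv \<psi>"] psi_D[OF tf] v by blast
    have "deriv \<psi> z2 < c / \<Lambda>"
      using d2p(2)[rule_format, of z2] z2 vd2 psi_d1[OF tf] by (auto simp: dist_real_def)
    then have "\<psi> 1 - \<psi> v \<le> (1 - v) * (c / \<Lambda>)" using z2 v
      by (intro order.trans[OF eq_refl[OF z2(3)]] mult_left_mono) auto
    then have "\<Lambda> * (1 - \<psi> v) \<le> \<Lambda> * ((1 - v) * (c / \<Lambda>))"
      using psi_ge1[OF tf, of 1] Lp by (intro mult_left_mono) auto
    also have "\<dots> = c * (1 - v)" using Lp by (simp add: field_simps)
    finally show "deriv \<psi> v \<ge> \<Lambda> * (1 - \<psi> v)" using A by linarith
  qed
qed

lemma sol_D:
  assumes sol: "regularized_solution \<psi> a \<epsilon> x0 v" and e: "\<epsilon> > 0" and x: "x > x0"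
  shows "(v has_real_derivative (- a * v x - sin (pi * x * (1 + \<psi> (v x) / 2)) / \<epsilon>)) (at x)"
proof -
  obtain D where D: "(v has_real_derivative D) (at x within {x0..})"
    "\<epsilon> * D = - a * \<epsilon> * v x - sin (pi * x * (1 + \<psi> (v x) / 2))"
    using sol x unfolding regularized_solution_def by (meson less_imp_le)
  have "x \<in> interior {x0..}" using x by simp
  then have "(v has_real_derivative D) (at x)" using D(1) at_within_interior by metis
  moreover have "D = - a * v x - sin (pi * x * (1 + \<psi> (v x) / 2)) / \<epsilon>"
    using D(2) e by (simp add: field_simps)
  ultimately show ?thesis by simp
qed

lemma sol_cont:
  assumes sol: "regularized_solution \<psi> a \<epsilon> x0 v" and e: "\<epsilon> > 0" and x: "x > x0"
  shows "isCont v x"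
  using sol_D[OF assms] by (rule DERIV_isCont)

lemma m_D:
  assumes tf: "transition_function \<psi>" and sol: "regularized_solution \<psi> a \<epsilon> x0 v" and e: "\<epsilon> > 0" and x: "x > x0"
  shows "((\<lambda>x. x * (1 + \<psi> (v x) / 2)) has_real_derivative
     (1 + \<psi> (v x) / 2 + x * (deriv \<psi> (v x) * (- a * v x - sin (pi * x * (1 + \<psi> (v x) / 2)) / \<epsilon>)) / 2)) (at x)"
proof -
  have dv: "(v has_real_derivative (- a * v x - sin (pi * x * (1 + \<psi> (v x) / 2)) / \<epsilon>)) (at x)"
    by (rule sol_D[OF sol e x])
  have dp: "((\<lambda>x. \<psi> (v x)) has_real_derivative deriv \<psi> (v x) * (- a * v x - sin (pi * x * (1 + \<psi> (v x) / 2)) / \<epsilon>)) (at x)"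
    using DERIV_chain2[OF psi_D[OF tf] dv] by simp
  have d1: "((\<lambda>x. 1 + \<psi> (v x) / 2) has_real_derivative (0 + deriv \<psi> (v x) * (- a * v x - sin (pi * x * (1 + \<psi> (v x) / 2)) / \<epsilon>) / 2)) (at x)"
    by (intro DERIV_add DERIV_const DERIV_cdivide dp)
  show ?thesis
    by (rule DERIV_cong[OF DERIV_mult[OF DERIV_ident d1]]) (simp add: algebra_simps)
qed

lemma m_cont:
  assumes tf: "transition_function \<psi>" and sol: "regularized_solution \<psi> a \<epsilon> x0 v" and e: "\<epsilon> > 0" and x: "x > x0"
  shows "isCont (\<lambda>x. x * (1 + \<psi> (v x) / 2)) x"
  using m_D[OF assms] by (rule DERIV_isCont)

lemma barrier:
  assumes tf: "transition_function \<psi>" and a: "a > 0" and e: "\<epsilon> > 0"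
    and sol: "regularized_solution \<psi> a \<epsilon> x0 v"
    and Lam: "\<forall>u. 1 - \<eta> < u \<and> u < 1 \<longrightarrow> deriv \<psi> u \<ge> (16 * \<epsilon> / sin (pi / 8)) * (1 - \<psi> u)"
    and eta: "\<eta> > 0" "\<eta> \<le> 1" and x: "x > x0" "x > 0"
    and big: "17 / (4 * x) < 1 - \<psi> (1 - \<eta>)"
    and eq: "x * (1 + \<psi> (v x) / 2) = 2 * real_of_int n + 1 / 8"
    and gap: "1 / 8 \<le> 3 / 2 * x - (2 * real_of_int n + 1 / 8)" "3 / 2 * x - (2 * real_of_int n + 1 / 8) \<le> 17 / 8"
  shows "\<exists>l. ((\<lambda>x. x * (1 + \<psi> (v x) / 2)) has_real_derivative l) (at x) \<and> l < 0"
proof -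
  define u where "u = v x"
  define G where "G = 3 / 2 * x - (2 * real_of_int n + 1 / 8)"
  define S where "S = sin (pi / 8)"
  have Spos: "S > 0" unfolding S_def by (rule sin_gt_zero) auto
  have G1: "1 - \<psi> u = 2 * G / x" using eq x unfolding G_def u_def by (simp add: field_simps)
  have "2 * G / x \<le> 2 * (17/8) / x" using gap x unfolding G_def by (intro divide_right_mono) auto
  also have "\<dots> = 17 / (4 * x)" by simp
  finally have "\<psi> u > \<psi> (1 - \<eta>)" using G1 big by linarith
  then have u1: "u > 1 - \<eta>" using psi_mono[OF tf, of u "1 - \<eta>"] by (meson not_less)
  have "2 * G / x > 0" using gap x unfolding G_def by simp
  then have "\<psi> u < 1" using G1 by linarith
  then have u2: "u < 1"
  proof (rule contrapos_pp)
    assume "\<not> u < 1" then show "\<not> \<psi> u < 1" using psi_ge1[OF tf, of u] by simp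
  qed
  have u0: "u > 0" using u1 eta by linarith
  have sinm: "sin (pi * x * (1 + \<psi> (v x) / 2)) = S"
  proof -
    have "pi * x * (1 + \<psi> (v x) / 2) = pi * (x * (1 + \<psi> (v x) / 2))" by (simp add: mult.assoc)
    also have "\<dots> = pi * (2 * real_of_int n + 1 / 8)" using eq by simp
    also have "\<dots> = pi / 8 + 2 * pi * real_of_int n" by (simp add: algebra_simps)
    finally have "pi * x * (1 + \<psi> (v x) / 2) = pi / 8 + 2 * pi * real_of_int n" .
    then show ?thesis unfolding S_def by (simp add: sin_add sin_int_2pin cos_int_2pin)
  qed
  define P where "P = deriv \<psi> u"
  define Dv where "Dv = - a * u - S / \<epsilon>"
  have PL: "P \<ge> (16 * \<epsilon> / S) * (2 * G / x)" using Lam u1 u2 G1 unfolding P_def S_def by metis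
  have "(16 * \<epsilon> / S) * (2 * G / x) \<ge> (16 * \<epsilon> / S) * (1 / (4 * x))"
    using gap x e Spos unfolding G_def by (intro mult_left_mono) (auto simp: field_simps)
  then have P1: "P \<ge> 4 * \<epsilon> / (S * x)" using PL by (simp add: field_simps)
  have Dv1: "Dv \<le> - S / \<epsilon>" unfolding Dv_def using a u0 by (simp add: mult_pos_pos)
  have "4 * \<epsilon> / (S * x) > 0" using Spos e x by simp
  then have P0: "P \<ge> 0" using P1 by linarith
  have "P * Dv \<le> P * (- S / \<epsilon>)" using Dv1 P0 by (rule mult_left_mono)
  also have "\<dots> \<le> (4 * \<epsilon> / (S * x)) * (- S / \<epsilon>)"
    using P1 Spos e by (intro mult_right_mono_neg) auto
  also have "\<dots> = - 4 / x" using Spos e x by (simp add: field_simps)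
  finally have PD: "x * (P * Dv) / 2 \<le> -2" using x by (simp add: field_simps)
  have "\<psi> u \<le> 1" by (rule psi_le1[OF tf])
  then have "1 + \<psi> u / 2 + x * (P * Dv) / 2 < 0" using PD by linarith
  moreover have "((\<lambda>x. x * (1 + \<psi> (v x) / 2)) has_real_derivative (1 + \<psi> u / 2 + x * (P * Dv) / 2)) (at x)"
    using m_D[OF tf sol e x(1)] sinm unfolding P_def Dv_def u_def by simp
  ultimately show ?thesis by blast
qed

lemma exit_lemma:
  assumes tf: "transition_function \<psi>" and a: "a > 0" and e: "\<epsilon> > 0"
    and sol: "regularized_solution \<psi> a \<epsilon> x0 v"
    and xs: "xs > x0" "xs > 0" and r: "r > 0" and s: "s > 0" and sr: "\<epsilon> \<le> s * r"
    and v1: "v xs \<le> 1" and big: "2 / xs < 1 - \<psi> 0"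
    and sinb: "\<forall>y. c \<le> y \<and> y \<le> 3 / 2 * (xs + r) \<longrightarrow> sin (pi * y) \<ge> s"
    and gapb: "3 / 2 * (xs + r) - c \<le> 1"
  shows "\<exists>x\<in>{xs..xs+r}. x * (1 + \<psi> (v x) / 2) < c"
proof (rule ccontr)
  assume "\<not> ?thesis"
  then have all: "\<And>x. xs \<le> x \<Longrightarrow> x \<le> xs + r \<Longrightarrow> x * (1 + \<psi> (v x) / 2) \<ge> c" by force
  have pos: "v x > 0" and sn: "sin (pi * x * (1 + \<psi> (v x) / 2)) \<ge> s"
    if x: "xs \<le> x" "x \<le> xs + r" for x
  proof -
    have x0: "x > 0" using x xs by linarith
    have mle: "x * (1 + \<psi> (v x) / 2) \<le> 3 / 2 * x"
      using psi_le1[OF tf, of "v x"] x0 by (simp add: field_simps)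
    also have "\<dots> \<le> 3 / 2 * (xs + r)" using x by simp
    finally have m2: "x * (1 + \<psi> (v x) / 2) \<le> 3 / 2 * (xs + r)" .
    have "pi * x * (1 + \<psi> (v x) / 2) = pi * (x * (1 + \<psi> (v x) / 2))" by (simp add: mult.assoc)
    moreover have "sin (pi * (x * (1 + \<psi> (v x) / 2))) \<ge> s"
      using sinb all[OF x] m2 by blast
    ultimately show "sin (pi * x * (1 + \<psi> (v x) / 2)) \<ge> s" by (metis mult.assoc)
    have "3 / 2 * x \<le> 3 / 2 * (xs + r)" using x by simp
    then have "3 / 2 * x - x * (1 + \<psi> (v x) / 2) \<le> 1" using all[OF x] gapb by linarith
    then have "x * (1 - \<psi> (v x)) \<le> 2" by (simp add: algebra_simps)
    then have "1 - \<psi> (v x) \<le> 2 / x" using x0 by (simp add: field_simps)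
    also have "\<dots> \<le> 2 / xs" using x xs by (intro divide_left_mono) auto
    finally have "\<psi> (v x) > \<psi> 0" using big by linarith
    then show "v x > 0" using psi_mono[OF tf, of "v x" 0] by (meson not_less)
  qed
  define q where "q x = v x + s / \<epsilon> * x" for x
  have "q (xs + r) \<le> q xs"
  proof (rule DERIV_nonpos_imp_nonincreasing[of xs "xs + r" q])
    show "xs \<le> xs + r" using r by simp
    fix x assume x: "xs \<le> x" "x \<le> xs + r"
    have "(q has_real_derivative (- a * v x - sin (pi * x * (1 + \<psi> (v x) / 2)) / \<epsilon> + s / \<epsilon> * 1)) (at x)"
      unfolding q_def using x xs
      by (intro DERIV_add sol_D[OF sol e] DERIV_cmult DERIV_ident) auto
    moreover have "- a * v x - sin (pi * x * (1 + \<psi> (v x) / 2)) / \<epsilon> + s / \<epsilon> * 1 \<le> 0"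
    proof -
      have "sin (pi * x * (1 + \<psi> (v x) / 2)) / \<epsilon> \<ge> s / \<epsilon>" using sn[OF x] e by (simp add: divide_right_mono)
      moreover have "a * v x > 0" using a pos[OF x] by simp
      ultimately show ?thesis by simp
    qed
    ultimately show "\<exists>y. (q has_real_derivative y) (at x) \<and> y \<le> 0" by blast
  qed
  then have "v (xs + r) + s / \<epsilon> * xs + s / \<epsilon> * r \<le> v xs + s / \<epsilon> * xs" unfolding q_def by (simp add: distrib_left)
  then have "v (xs + r) \<le> v xs - s / \<epsilon> * r" by linarith
  moreover have "s / \<epsilon> * r \<ge> 1" using sr e by (simp add: field_simps)
  ultimately have "v (xs + r) \<le> 0" using v1 by linarith
  moreover have "v (xs + r) > 0" using pos[of "xs + r"] r by simp
  ultimately show False by simp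
qed

lemma trig_bound:
  fixes w a t :: real
  shows "- sqrt (w^2 + a^2) \<le> w * cos t - a * sin t"
proof -
  have gen: "(w * x - a * y)^2 + (w * y + a * x)^2 = (w^2 + a^2) * (y^2 + x^2)" for x y :: real
    by (simp add: power2_eq_square algebra_simps)
  have id: "(w * cos t - a * sin t)^2 + (w * sin t + a * cos t)^2 = (w^2 + a^2) * ((sin t)^2 + (cos t)^2)"
    by (rule gen)
  then have "(w * cos t - a * sin t)^2 \<le> w^2 + a^2" by simp (smt (verit) zero_le_power2)
  then have "sqrt ((w * cos t - a * sin t)^2) \<le> sqrt (w^2 + a^2)" by (rule real_sqrt_le_mono)
  then show ?thesis by simp
qed

lemma attain:
  fixes \<omega> :: real
  assumes tf: "transition_function \<psi>" and a: "a > 0" and e: "\<epsilon> > 0"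
    and sol: "regularized_solution \<psi> a \<epsilon> x0 v" and X: "X > x0"
    and om: "\<omega> = 3 * pi / 2"
  shows "\<exists>k::nat. (2 * pi * real k + pi - arctan (a / \<omega>)) / \<omega> \<ge> B \<and>
                  v ((2 * pi * real k + pi - arctan (a / \<omega>)) / \<omega>) \<le> 1"
proof -
  define \<phi> where "\<phi> = arctan (a / \<omega>)"
  define K where "K = \<omega>^2 + a^2"
  define R where "R = sqrt K"
  have ompos: "\<omega> > 0" unfolding om using pi_gt_zero by simp
  have Kpos: "K > 0" unfolding K_def using a by (intro add_nonneg_pos) auto
  have Rpos: "R > 0" unfolding R_def using Kpos by simp
  have RK: "R^2 = K" unfolding R_def using Kpos by simp
  define p where "p x = (\<omega> * cos (\<omega> * x) - a * sin (\<omega> * x)) / (\<epsilon> * K)" for x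
  have pmin: "p x \<ge> - 1 / (\<epsilon> * R)" for x
  proof -
    have "- R \<le> \<omega> * cos (\<omega> * x) - a * sin (\<omega> * x)" unfolding R_def K_def by (rule trig_bound)
    then have "- R / (\<epsilon> * K) \<le> p x" unfolding p_def using e Kpos by (intro divide_right_mono) auto
    moreover have "- R / (\<epsilon> * K) = - 1 / (\<epsilon> * R)" using RK Rpos e Kpos by (simp add: field_simps power2_eq_square)
    ultimately show ?thesis by simp
  qed
  define xk where "xk k = (2 * pi * real k + pi - \<phi>) / \<omega>" for k :: nat
  have pk: "p (xk k) = - 1 / (\<epsilon> * R)" for k
  proof -
    have sq: "sqrt (1 + (a / \<omega>)^2) = R / \<omega>"
    proof (rule real_sqrt_unique)
      show "(R / \<omega>)^2 = 1 + (a / \<omega>)^2" using RK ompos unfolding K_def by (simp add: field_simps power2_eq_square)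
      show "0 \<le> R / \<omega>" using Rpos ompos by simp
    qed
    have cphi: "cos \<phi> = \<omega> / R" unfolding \<phi>_def cos_arctan sq using Rpos ompos by simp
    have sphi: "sin \<phi> = a / R" unfolding \<phi>_def sin_arctan sq using Rpos ompos by simp
    have arg: "\<omega> * xk k = (pi - \<phi>) + 2 * pi * real_of_int (int k)" unfolding xk_def using ompos by simp
    have c: "cos (\<omega> * xk k) = - \<omega> / R" unfolding arg cos_add sin_int_2pin cos_int_2pin using cphi by simp
    have s: "sin (\<omega> * xk k) = a / R" unfolding arg sin_add sin_int_2pin cos_int_2pin using sphi by simp
    have E: "\<omega> * cos (\<omega> * xk k) - a * sin (\<omega> * xk k) = - K / R"
      unfolding c s K_def using Rpos by (simp add: field_simps power2_eq_square)
    show ?thesis unfolding p_def E using Rpos e Kpos by (simp add: field_simps)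
  qed
  have dp: "(p has_real_derivative ((\<omega> * (- sin (\<omega> * x) * \<omega>) - a * (cos (\<omega> * x) * \<omega>)) / (\<epsilon> * K))) (at x)" for x
    unfolding p_def using e Kpos by (auto intro!: derivative_eq_intros)
  define F where "F x = exp (a * x) * (v x - p x)" for x
  have dF: "(F has_real_derivative 0) (at x)" if x: "x > x0" "v x > 1" for x
  proof -
    have psi1: "\<psi> (v x) = 1" using psi_ge1[OF tf, of "v x"] x by simp
    have sarg: "pi * x * (1 + \<psi> (v x) / 2) = \<omega> * x" using psi1 om by simp
    have dv: "(v has_real_derivative (- a * v x - sin (\<omega> * x) / \<epsilon>)) (at x)"
      using sol_D[OF sol e x(1)] sarg by simp
    define Dp where "Dp = (\<omega> * (- sin (\<omega> * x) * \<omega>) - a * (cos (\<omega> * x) * \<omega>)) / (\<epsilon> * K)"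
    have dW: "((\<lambda>x. v x - p x) has_real_derivative ((- a * v x - sin (\<omega> * x) / \<epsilon>) - Dp)) (at x)"
      unfolding Dp_def by (rule DERIV_diff[OF dv dp])
    have dE: "((\<lambda>x. exp (a * x)) has_real_derivative exp (a * x) * a) (at x)"
      by (auto intro!: derivative_eq_intros)
    have "(F has_real_derivative (exp (a * x) * a * (v x - p x) + ((- a * v x - sin (\<omega> * x) / \<epsilon>) - Dp) * exp (a * x))) (at x)"
      unfolding F_def using DERIV_mult[OF dE dW] by simp
    moreover have "exp (a * x) * a * (v x - p x) + ((- a * v x - sin (\<omega> * x) / \<epsilon>) - Dp) * exp (a * x) = 0"
    proof -
      have "a * p x + Dp = (a * (\<omega> * cos (\<omega> * x) - a * sin (\<omega> * x)) + (\<omega> * (- sin (\<omega> * x) * \<omega>) - a * (cos (\<omega> * x) * \<omega>))) / (\<epsilon> * K)"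
        unfolding p_def Dp_def by (simp add: add_divide_distrib)
      also have "\<dots> = (- K * sin (\<omega> * x)) / (\<epsilon> * K)"
        unfolding K_def by (simp add: algebra_simps power2_eq_square)
      also have "\<dots> = - sin (\<omega> * x) / \<epsilon>" using Kpos e by simp
      finally have "a * p x + Dp = - sin (\<omega> * x) / \<epsilon>" .
      then have "a * (v x - p x) + ((- a * v x - sin (\<omega> * x) / \<epsilon>) - Dp) = 0"
        by (simp add: algebra_simps)
      moreover have "exp (a * x) * a * (v x - p x) + ((- a * v x - sin (\<omega> * x) / \<epsilon>) - Dp) * exp (a * x)
          = exp (a * x) * (a * (v x - p x) + ((- a * v x - sin (\<omega> * x) / \<epsilon>) - Dp))"
        by (simp only: distrib_left mult.commute mult.left_commute mult.assoc)
      ultimately show ?thesis by simp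
    qed
    ultimately show ?thesis by simp
  qed
  have contv: "continuous_on {c..d} v" if "c > x0" for c d
    using sol_cont[OF sol e] that by (intro continuous_at_imp_continuous_on) auto
  have contF: "continuous_on {c..d} F" if "c > x0" for c d
    unfolding F_def p_def using contv[OF that] e Kpos by (intro continuous_intros) auto
  define W0 where "W0 = \<bar>v X - p X\<bar>"
  obtain n :: nat where n: "max B (X + W0 / a + 1) * \<omega> / (2 * pi) < real n"
    using reals_Archimedean2 by blast
  define y where "y = xk n"
  have "2 * pi * real n \<le> 2 * pi * real n + pi - \<phi>" using arctan_bounded[of "a / \<omega>"] unfolding \<phi>_def by simp
  then have "2 * pi * real n / \<omega> \<le> y" unfolding y_def xk_def using ompos by (intro divide_right_mono) auto
  moreover have "max B (X + W0 / a + 1) < 2 * pi * real n / \<omega>"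
  proof -
    define T where "T = max B (X + W0 / a + 1)"
    have "T * \<omega> < real n * (2 * pi)" using n pi_gt_zero unfolding T_def[symmetric]
      by (simp add: pos_divide_less_eq)
    then have "T * \<omega> < 2 * pi * real n" by (simp add: mult_ac)
    then show ?thesis unfolding T_def[symmetric] using ompos by (simp add: pos_less_divide_eq)
  qed
  ultimately have yB: "y \<ge> B" and yX: "y \<ge> X + W0 / a + 1" by auto
  have "W0 / a \<ge> 0" unfolding W0_def using a by simp
  then have Xy: "X < y" using yX by linarith
  have pyneg: "p y < 0" using pk[of n] e Rpos unfolding y_def by simp
  have "v y \<le> 1"
  proof -
    define S where "S = {x \<in> {X..y}. v x \<le> 1}"
    have clS: "closed S" unfolding S_def
      by (intro continuous_on_closed_Collect_le contv X continuous_on_const) auto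
    show ?thesis
    proof (cases "S = {}")
      case True
      then have gt: "v x > 1" if "X \<le> x" "x \<le> y" for x using that unfolding S_def by force
      have "F y = F X"
        by (rule DERIV_isconst_end[OF Xy contF[OF X]]) (use gt X in \<open>auto intro!: dF\<close>)
      then have eq: "exp (a * y) * (v y - p y) = exp (a * X) * (v X - p X)" unfolding F_def .
      have "exp (a * y) = exp (a * (y - X)) * exp (a * X)" by (simp add: algebra_simps flip: exp_add)
      then have "exp (a * (y - X)) * (v y - p y) = v X - p X" using eq by simp
      moreover have "exp (a * (y - X)) \<ge> 1 + W0"
      proof -
        have "a * (y - X) \<ge> W0" using yX a by (simp add: field_simps)
        then show ?thesis using exp_ge_add_one_self[of "a * (y - X)"] by linarith
      qed
      ultimately have "v y - p y \<le> 1"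
      proof (intro leI notI)
        assume h1: "exp (a * (y - X)) * (v y - p y) = v X - p X" and h2: "exp (a * (y - X)) \<ge> 1 + W0"
          and h3: "1 < v y - p y"
        have W0: "W0 \<ge> 0" unfolding W0_def by simp
        have "(1 + W0) * 1 < (1 + W0) * (v y - p y)" using h3 W0 by (intro mult_strict_left_mono) auto
        also have "\<dots> \<le> exp (a * (y - X)) * (v y - p y)" using h2 h3 by (intro mult_right_mono) auto
        also have "\<dots> \<le> W0" unfolding h1 W0_def by simp
        finally show False by simp
      qed
      then show ?thesis using pyneg by linarith
    next
      case False
      have bdd: "bdd_above S" unfolding S_def by (auto intro: bdd_aboveI[of _ y])
      define z where "z = Sup S"
      have zS: "z \<in> S" unfolding z_def using closed_contains_Sup[OF False bdd clS] .
      then have zr: "X \<le> z" "z \<le> y" "v z \<le> 1" unfolding S_def by auto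
      show ?thesis
      proof (cases "z = y")
        case True then show ?thesis using zr by simp
      next
        case False
        then have zy: "z < y" using zr by simp
        have gt: "v x > 1" if "z < x" "x \<le> y" for x
        proof (rule ccontr)
          assume "\<not> v x > 1"
          then have "x \<in> S" unfolding S_def using that zr by auto
          then have "x \<le> z" unfolding z_def by (rule cSup_upper[OF _ bdd])
          then show False using that by simp
        qed
        have "F y = F z"
          by (rule DERIV_isconst_end[OF zy contF]) (use gt zr X in \<open>auto intro!: dF\<close>)
        then have eq: "exp (a * y) * (v y - p y) = exp (a * z) * (v z - p z)" unfolding F_def .
        have "exp (a * y) = exp (a * (y - z)) * exp (a * z)" by (simp add: algebra_simps flip: exp_add)
        then have eq2: "exp (a * (y - z)) * (v y - p y) = v z - p z" using eq by simp
        have E1: "exp (a * (y - z)) \<ge> 1" using zy a by simp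
        have bnd: "v z - p z \<le> 1 + 1 / (\<epsilon> * R)" using zr(3) pmin[of z] by simp
        have pos1: "1 + 1 / (\<epsilon> * R) > 0" using e Rpos by (simp add: add_pos_pos)
        have "v y - p y \<le> 1 + 1 / (\<epsilon> * R)"
        proof (cases "v y - p y \<ge> 0")
          case True
          then have "v y - p y \<le> exp (a * (y - z)) * (v y - p y)" using E1 by (simp add: mult_le_cancel_right1)
          then show ?thesis using eq2 bnd by simp
        next
          case False then show ?thesis using pos1 by simp
        qed
        then show ?thesis using pk[of n] unfolding y_def[symmetric] by simp
      qed
    qed
  qed
  then show ?thesis using yB unfolding y_def xk_def \<phi>_def by blast
qed

lemma inv_abstract:
  fixes m L :: "real \<Rightarrow> real"
  assumes Lmono: "\<And>x y. x \<le> y \<Longrightarrow> L x \<le> L y"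
    and cont: "\<And>x. x \<ge> xs \<Longrightarrow> isCont m x"
    and bar: "\<And>x. x \<ge> xs \<Longrightarrow> m x = L x \<Longrightarrow> \<exists>l. (m has_real_derivative l) (at x) \<and> l < 0"
    and start: "m xs < L xs"
  shows "\<forall>x\<ge>xs. m x < L x"
proof (rule ccontr)
  assume neg: "\<not> (\<forall>x\<ge>xs. m x < L x)"
  define A where "A = {x. xs \<le> x \<and> m x \<ge> L x}"
  have Ane: "A \<noteq> {}" using neg unfolding A_def by (auto simp: not_less)
  have bdd: "bdd_below A" unfolding A_def by (auto intro: bdd_belowI[of _ xs])
  define xc where "xc = Inf A"
  have before: "m x < L x" if "xs \<le> x" "x < xc" for x
  proof (rule ccontr)
    assume "\<not> m x < L x"
    then have "x \<in> A" unfolding A_def using that by auto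
    then have "xc \<le> x" unfolding xc_def by (rule cInf_lower[OF _ bdd])
    then show False using that by simp
  qed
  have xsxc: "xs \<le> xc" unfolding xc_def using Ane by (intro cInf_greatest) (auto simp: A_def)
  have ge: "m xc \<ge> L xc"
  proof (rule ccontr)
    assume "\<not> m xc \<ge> L xc"
    then have gap: "L xc - m xc > 0" by simp
    obtain d where d: "d > 0" "\<forall>y. dist y xc < d \<longrightarrow> dist (m y) (m xc) < L xc - m xc"
      using cont[OF xsxc] gap unfolding continuous_at_eps_delta by blast
    have "xc + d \<le> Inf A"
    proof (rule cInf_greatest[OF Ane])
      fix y assume yA: "y \<in> A"
      show "xc + d \<le> y"
      proof (rule ccontr)
        assume "\<not> xc + d \<le> y"
        have y1: "xs \<le> y" "m y \<ge> L y" using yA unfolding A_def by auto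
        show False
        proof (cases "y < xc")
          case True then show ?thesis using before[OF y1(1)] y1(2) by simp
        next
          case False
          then have "dist y xc < d" using \<open>\<not> xc + d \<le> y\<close> by (simp add: dist_real_def)
          then have "m y < L xc" using d(2) by (auto simp: dist_real_def)
          moreover have "L xc \<le> L y" using False by (intro Lmono) simp
          ultimately show ?thesis using y1(2) by simp
        qed
      qed
    qed
    then show False using d(1) unfolding xc_def by simp
  qed
  have xslt: "xs < xc" using xsxc ge start by (cases "xs = xc") auto
  have le: "m xc \<le> L xc"
  proof (rule ccontr)
    assume "\<not> m xc \<le> L xc"
    then have gap: "m xc - L xc > 0" by simp
    obtain d where d: "d > 0" "\<forall>y. dist y xc < d \<longrightarrow> dist (m y) (m xc) < m xc - L xc"
      using cont[OF xsxc] gap unfolding continuous_at_eps_delta by blast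
    define y where "y = max xs (xc - d / 2)"
    have y1: "xs \<le> y" "y < xc" "dist y xc < d" using xslt d(1) unfolding y_def by (auto simp: dist_real_def)
    have "m y > L xc" using d(2) y1(3) by (auto simp: dist_real_def)
    moreover have "L y \<le> L xc" using y1 by (intro Lmono) simp
    ultimately show False using before[OF y1(1,2)] by simp
  qed
  then have eq: "m xc = L xc" using ge by simp
  obtain l where l: "(m has_real_derivative l) (at xc)" "l < 0" using bar[OF xsxc eq] by blast
  obtain d where d: "d > 0" "\<forall>h>0. h < d \<longrightarrow> m xc < m (xc - h)" using DERIV_neg_dec_left[OF l] by blast
  define \<mu> where "\<mu> = min d (xc - xs)"
  define h where "h = \<mu> / 2"
  have mm: "\<mu> \<le> xc - xs" "\<mu> \<le> d" "\<mu> > 0" using d(1) xslt unfolding \<mu>_def by auto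
  have h1: "h > 0" using mm unfolding h_def by linarith
  have h2: "h < d" using mm unfolding h_def by linarith
  have h3: "xs \<le> xc - h" using mm unfolding h_def by linarith
  have h4: "xc - h < xc" using mm unfolding h_def by linarith
  note h = h1 h2 h3 h4
  have "m xc < m (xc - h)" using d(2) h by simp
  moreover have "m (xc - h) < L (xc - h)" using before h by simp
  moreover have "L (xc - h) \<le> L xc" using h by (intro Lmono) simp
  ultimately show False using eq by simp
qed

lemma sin_band:
  assumes "0 < \<phi>" "\<phi> < pi / 2" "1 / 8 \<le> t" "t \<le> 1 - \<phi> / (2 * pi)"
  shows "sin (pi * t) \<ge> min (sin (pi / 8)) (sin (\<phi> / 2))"
proof (cases "pi * t \<le> pi / 2")
  case True
  have "sin (pi / 8) \<le> sin (pi * t)"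
    using assms(3) True by (intro sin_monotone_2pi_le) auto
  then show ?thesis by simp
next
  case False
  have "pi * t \<le> pi * (1 - \<phi> / (2 * pi))" using assms(4) by (intro mult_left_mono) auto
  also have "\<dots> = pi - \<phi> / 2" by (simp add: field_simps)
  finally have ph: "\<phi> / 2 \<le> pi - pi * t" by simp
  have "sin (\<phi> / 2) \<le> sin (pi - pi * t)"
  proof (rule sin_monotone_2pi_le)
    show "- (pi / 2) \<le> \<phi> / 2" using assms(1) pi_gt_zero by linarith
    show "\<phi> / 2 \<le> pi - pi * t" by (rule ph)
    show "pi - pi * t \<le> pi / 2" using False by linarith
  qed
  then show ?thesis by simp
qed

lemma sin_shift: "sin (pi * (t + 2 * real k)) = sin (pi * t)"
proof -
  have "pi * (t + 2 * real k) = pi * t + 2 * pi * real k" by (simp add: algebra_simps)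
  then show ?thesis using sin_int_2pin[of "int k"] cos_int_2pin[of "int k"] by (simp add: sin_add)
qed

lemma recip_lt:
  fixes c D x :: real
  assumes "D > 0" "c / D < x" "c > 0" shows "c / x < D"
proof -
  have x0: "x > 0" using assms by (smt (verit) divide_pos_pos)
  have "c < x * D" using assms(1,2) by (simp add: pos_divide_less_eq)
  then show ?thesis using x0 by (simp add: pos_divide_less_eq mult.commute)
qed

theorem proposition6:
  fixes \<psi> :: "real \<Rightarrow> real" and a :: real
  assumes "transition_function \<psi>" and "a > 0"
  shows "\<exists>\<epsilon>0>0. \<forall>\<epsilon>. 0 < \<epsilon> \<and> \<epsilon> < \<epsilon>0 \<longrightarrow>
           (\<forall>x0 v. regularized_solution \<psi> a \<epsilon> x0 v \<longrightarrow>
              (\<exists>xT\<ge>0. \<forall>x\<ge>xT. x \<ge> x0 \<longrightarrow> v x < 1))"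
proof -
  note tf = assms(1) and a = assms(2)
  define \<omega> where "\<omega> = 3 * pi / 2"
  define \<phi> where "\<phi> = arctan (a / \<omega>)"
  define s where "s = min (sin (pi / 8)) (sin (\<phi> / 2))"
  define r where "r = \<phi> / (3 * pi)"
  have ompos: "\<omega> > 0" unfolding \<omega>_def using pi_gt_zero by simp
  have phipos: "\<phi> > 0" unfolding \<phi>_def using a ompos by simp
  have phiub: "\<phi> < pi / 2" unfolding \<phi>_def by (rule arctan_ubound)
  have s1: "sin (pi / 8) > 0" by (rule sin_gt_zero) auto
  have s2: "sin (\<phi> / 2) > 0" using phipos phiub by (intro sin_gt_zero) auto
  have spos: "s > 0" unfolding s_def using s1 s2 by simp
  have rpos: "r > 0" unfolding r_def using phipos by simp
  show ?thesis
  proof (rule exI[of _ "s * r"], intro conjI allI impI)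
    show "s * r > 0" using spos rpos by simp
    fix \<epsilon> x0 v
    assume eps: "0 < \<epsilon> \<and> \<epsilon> < s * r" and sol: "regularized_solution \<psi> a \<epsilon> x0 v"
    have e: "\<epsilon> > 0" using eps by simp
    define \<Lambda> where "\<Lambda> = 16 * \<epsilon> / sin (pi / 8)"
    have Lpos: "\<Lambda> > 0" unfolding \<Lambda>_def using e s1 by simp
    obtain \<eta> where eta: "\<eta> > 0" "\<eta> \<le> 1"
      and Lam: "\<forall>u. 1 - \<eta> < u \<and> u < 1 \<longrightarrow> deriv \<psi> u \<ge> \<Lambda> * (1 - \<psi> u)"
      using psi_top[OF tf Lpos] by blast
    have q1: "1 - \<psi> (1 - \<eta>) > 0" using psi_lt1[OF tf, of "1 - \<eta>"] eta by simp
    have q0: "1 - \<psi> 0 > 0" using psi_lt1[OF tf, of 0] by simp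
    define X where "X = max (x0 + 1) (max 1 (max (17 / (4 * (1 - \<psi> (1 - \<eta>))) + 1) (2 / (1 - \<psi> 0) + 1)))"
    have Xp: "x > x0" "x > 0" "17 / (4 * x) < 1 - \<psi> (1 - \<eta>)" "2 / x < 1 - \<psi> 0" if "x \<ge> X" for x
    proof -
      show "x > x0" "x > 0" using that unfolding X_def by auto
      have "17 / (4 * (1 - \<psi> (1 - \<eta>))) < x" using that unfolding X_def by auto
      then have "(17 / 4) / (1 - \<psi> (1 - \<eta>)) < x" by simp
      then have "(17 / 4) / x < 1 - \<psi> (1 - \<eta>)" by (rule recip_lt[OF q1]) simp
      then show "17 / (4 * x) < 1 - \<psi> (1 - \<eta>)" by simp
      have "2 / (1 - \<psi> 0) < x" using that unfolding X_def by auto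
      then show "2 / x < 1 - \<psi> 0" by (rule recip_lt[OF q0]) simp
    qed
    have Xx0: "X > x0" unfolding X_def by simp
    obtain k :: nat where k1: "(2 * pi * real k + pi - \<phi>) / \<omega> \<ge> X"
      and k2: "v ((2 * pi * real k + pi - \<phi>) / \<omega>) \<le> 1"
      using attain[OF tf a e sol Xx0 \<omega>_def, of X] unfolding \<phi>_def by blast
    define xs where "xs = (2 * pi * real k + pi - \<phi>) / \<omega>"
    have xsX: "xs \<ge> X" using k1 unfolding xs_def .
    have ph32: "3 / 2 * xs = 2 * real k + 1 - \<phi> / pi"
      unfolding xs_def \<omega>_def using pi_gt_zero by (simp add: field_simps)
    have r32: "3 / 2 * r = \<phi> / (2 * pi)" unfolding r_def by simp
    define c where "c = 2 * real k + 1 / 8"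
    have top: "3 / 2 * (xs + r) = 2 * real k + 1 - \<phi> / (2 * pi)"
  proof -
    have "3 / 2 * (xs + r) = 3 / 2 * xs + 3 / 2 * r" by (simp add: algebra_simps)
    moreover have "\<phi> / (2 * pi) = (\<phi> / pi) / 2" by simp
    ultimately show ?thesis using ph32 r32 by linarith
  qed
    have sinb: "\<forall>y. c \<le> y \<and> y \<le> 3 / 2 * (xs + r) \<longrightarrow> sin (pi * y) \<ge> s"
    proof (intro allI impI)
      fix y assume y: "c \<le> y \<and> y \<le> 3 / 2 * (xs + r)"
      define t where "t = y - 2 * real k"
      have t: "1 / 8 \<le> t" "t \<le> 1 - \<phi> / (2 * pi)" using y top unfolding t_def c_def by auto
      have "sin (pi * y) = sin (pi * (t + 2 * real k))" unfolding t_def by simp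
      also have "\<dots> = sin (pi * t)" by (rule sin_shift)
      finally show "sin (pi * y) \<ge> s" unfolding s_def using sin_band[OF phipos phiub t] by simp
    qed
    have "\<phi> / (2 * pi) > 0" using phipos by simp
    then have gapb: "3 / 2 * (xs + r) - c \<le> 1" unfolding top c_def by linarith
    have sr: "\<epsilon> \<le> s * r" using eps by simp
    obtain x1 where x1: "x1 \<in> {xs..xs+r}" "x1 * (1 + \<psi> (v x1) / 2) < c"
      using exit_lemma[OF tf a e sol Xp(1)[OF xsX] Xp(2)[OF xsX] rpos spos sr k2[folded xs_def]
          Xp(4)[OF xsX] sinb gapb] by blast
    define m where "m x = x * (1 + \<psi> (v x) / 2)" for x :: real
    define L where "L x = 2 * real_of_int \<lfloor>(3 / 2 * x - 1 / 4) / 2\<rfloor> + 1 / 8" for x :: real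
    have Lb: "L x \<le> 3 / 2 * x - 1 / 8" "3 / 2 * x - L x < 17 / 8" for x :: real
    proof -
      define F where "F = real_of_int \<lfloor>(3 / 2 * x - 1 / 4) / 2\<rfloor>"
      have LF: "L x = 2 * F + 1 / 8" unfolding L_def F_def by simp
      have F1: "F \<le> (3 / 2 * x - 1 / 4) / 2" unfolding F_def by (rule of_int_floor_le)
      have F2: "(3 / 2 * x - 1 / 4) / 2 < F + 1" unfolding F_def by (rule real_of_int_floor_add_one_gt)
      show "L x \<le> 3 / 2 * x - 1 / 8" using F1 unfolding LF by (simp add: field_simps)
      show "3 / 2 * x - L x < 17 / 8" using F2 unfolding LF by (simp add: field_simps)
    qed
    have x1X: "x1 \<ge> X" using x1(1) xsX by simp
    have Lx1: "L x1 = c"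
    proof -
      have "3 / 2 * x1 \<ge> 3 / 2 * xs" "3 / 2 * x1 \<le> 3 / 2 * (xs + r)" using x1(1) by auto
      then have b: "2 * real k + 1 - \<phi> / pi \<le> 3 / 2 * x1" "3 / 2 * x1 \<le> 2 * real k + 1 - \<phi> / (2 * pi)"
        using ph32 top by linarith+
      define q where "q = \<phi> / pi"
      have q1: "q < 1 / 2" unfolding q_def using phiub pi_gt_zero by (simp add: field_simps)
      have q2: "q > 0" unfolding q_def using phipos by simp
      have hq: "\<phi> / (2 * pi) = q / 2" unfolding q_def by simp
      have b1: "2 * real k + 1 - q \<le> 3 / 2 * x1" using b(1) unfolding q_def .
      have b2: "3 / 2 * x1 \<le> 2 * real k + 1 - q / 2" using b(2) unfolding hq .
      have "\<lfloor>(3 / 2 * x1 - 1 / 4) / 2\<rfloor> = int k"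
      proof (rule floor_unique)
        show "real_of_int (int k) \<le> (3 / 2 * x1 - 1 / 4) / 2" using b1 q1 by simp
        show "(3 / 2 * x1 - 1 / 4) / 2 < real_of_int (int k) + 1" using b2 q2 by simp
      qed
      then show ?thesis unfolding L_def c_def by simp
    qed
    have inv: "\<forall>x\<ge>x1. m x < L x"
    proof (rule inv_abstract)
      show "L x \<le> L y" if "x \<le> y" for x y
        unfolding L_def using that by (simp add: floor_mono)
      show "isCont m x" if "x \<ge> x1" for x
        unfolding m_def using m_cont[OF tf sol e] Xp(1) x1X that by simp
      show "m x1 < L x1" unfolding m_def Lx1 using x1(2) .
      show "\<exists>l. (m has_real_derivative l) (at x) \<and> l < 0" if x: "x \<ge> x1" "m x = L x" for x
      proof -
        have xX: "x \<ge> X" using x x1X by simp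
        show ?thesis unfolding m_def
        proof (rule barrier[OF tf a e sol _ eta Xp(1)[OF xX] Xp(2)[OF xX] Xp(3)[OF xX]])
          show "\<forall>u. 1 - \<eta> < u \<and> u < 1 \<longrightarrow> 16 * \<epsilon> / sin (pi / 8) * (1 - \<psi> u) \<le> deriv \<psi> u"
            using Lam unfolding \<Lambda>_def .
          show "x * (1 + \<psi> (v x) / 2) = 2 * real_of_int \<lfloor>(3 / 2 * x - 1 / 4) / 2\<rfloor> + 1 / 8"
            using x(2) unfolding m_def L_def .
          show "1 / 8 \<le> 3 / 2 * x - (2 * real_of_int \<lfloor>(3 / 2 * x - 1 / 4) / 2\<rfloor> + 1 / 8)"
            using Lb(1)[of x] unfolding L_def by simp
          show "3 / 2 * x - (2 * real_of_int \<lfloor>(3 / 2 * x - 1 / 4) / 2\<rfloor> + 1 / 8) \<le> 17 / 8"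
            using Lb(2)[of x] unfolding L_def by simp
        qed
      qed
    qed
    show "\<exists>xT\<ge>0. \<forall>x\<ge>xT. x \<ge> x0 \<longrightarrow> v x < 1"
    proof (intro exI[of _ x1] conjI allI impI)
      show "x1 \<ge> 0" using Xp(2)[OF x1X] by simp
      fix x assume x: "x1 \<le> x" "x0 \<le> x"
      show "v x < 1"
      proof (rule ccontr)
        assume "\<not> v x < 1"
        then have "\<psi> (v x) = 1" using psi_ge1[OF tf, of "v x"] by simp
        then have "m x = 3 / 2 * x" unfolding m_def by simp
        then show False using inv x(1) Lb(1)[of x] by force
      qed
    qed
  qed
qed

end
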